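(* Consider the ARLOD model on a finite connected graph $G$ with $N\ge 2$ agents, learning rate $\alpha\in(0,1)$, exploration rate $\epsilon\in(0,1)$, and any initial Q-values in $[-1,1]$. Then $$\mathbb{P}\big(\exists\, t_0<\infty,\ \exists\, o\in\{-1,1\}: Q^i_o(t)>Q^i_{-o}(t)\ \ \forall i\in\{1,\dots,N\},\ \forall t\ge t_0\big)=1,$$ i.e. almost surely the system eventually reaches consensus and remains in it forever.
   Context: The ARLOD (asymmetric reinforcement learning for opinion dynamics) model: $G=(V,E)$ is a finite simple undirected graph on vertex set $V=\{1,\dots,N\}$ (agents); $N(i)=\{u:(u,i)\in E\}$ is the neighbourhood of $i$. Each agent $i$ holds two Q-values $Q^i_{1}(t),Q^i_{-1}(t)\in\mathbb{R}$, initialized in $[-1,1]$. The favoured opinion of agent $i$ at time $t$ is $1$ if $Q^i_1(t)\ge Q^i_{-1}(t)$ and $-1$ otherwise. In each discrete round $t$: an agent $i$ is chosen uniformly at random from $V$; $i$ chooses a neighbour $j\in N(i)$ uniformly at random; $i$ expresses an opinion $o_i(t)$, equal to its favoured opinion with probability $1-\epsilon$ and to the other opinion with probability $\epsilon$; $j$ responds with $R_j=1$ if $o_i(t)$ equals $j$'s favoured opinion and $R_j=-1$ otherwise; then only agent $i$ updates, via $Q^i_{o_i(t)}(t+1)=(1-\alpha)Q^i_{o_i(t)}(t)+\alpha R_j$ and $Q^i_{-o_i(t)}(t+1)=Q^i_{-o_i(t)}(t)$. All other agents' Q-values are unchanged in that round. *)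

theory Defs
  imports "HOL-Probability.Probability"
begin

text \<open>Opinions are the integers 1 and -1.
  A state assigns to each agent i and opinion o the Q-value Q i o.\<close>

type_synonym qstate = "nat \<Rightarrow> int \<Rightarrow> real"

definition agents :: "nat \<Rightarrow> nat set" where
  "agents N = {1..N}"

definition simple_graph :: "nat \<Rightarrow> (nat \<Rightarrow> nat \<Rightarrow> bool) \<Rightarrow> bool" where
  "simple_graph N E \<longleftrightarrow>
     (\<forall>u v. E u v \<longrightarrow> u \<in> agents N \<and> v \<in> agents N) \<and>
     (\<forall>u v. E u v \<longrightarrow> E v u) \<and> (\<forall>u. \<not> E u u)"

definition connected_graph :: "nat \<Rightarrow> (nat \<Rightarrow> nat \<Rightarrow> bool) \<Rightarrow> bool" where
  "connected_graph N E \<longleftrightarrow> (\<forall>u\<in>agents N. \<forall>v\<in>agents N. E\<^sup>*\<^sup>* u v)"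

definition nbrs :: "(nat \<Rightarrow> nat \<Rightarrow> bool) \<Rightarrow> nat \<Rightarrow> nat set" where
  "nbrs E i = {u. E u i}"

definition favoured :: "qstate \<Rightarrow> nat \<Rightarrow> int" where
  "favoured Q i = (if Q i 1 \<ge> Q i (-1) then 1 else -1)"

text \<open>None of these distributions depends on the current Q-values, so the process is
  driven by an i.i.d. sequence of such draws.\<close>
definition round_noise :: "nat \<Rightarrow> (nat \<Rightarrow> nat \<Rightarrow> bool) \<Rightarrow> real \<Rightarrow> (nat \<times> nat \<times> bool) pmf" where
  "round_noise N E eps =
     do { i \<leftarrow> pmf_of_set (agents N);
          j \<leftarrow> pmf_of_set (nbrs E i);
          b \<leftarrow> bernoulli_pmf eps;
          return_pmf (i, j, b) }"

definition arlod_step :: "real \<Rightarrow> qstate \<Rightarrow> nat \<times> nat \<times> bool \<Rightarrow> qstate" where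
  "arlod_step \<alpha> Q c =
     (case c of (i, j, explore) \<Rightarrow>
        let ex = (if explore then - favoured Q i else favoured Q i);
            R = (if ex = favoured Q j then 1 else -1 :: real)
        in Q(i := (Q i)(ex := (1 - \<alpha>) * Q i ex + \<alpha> * R)))"

fun arlod_traj :: "real \<Rightarrow> qstate \<Rightarrow> (nat \<times> nat \<times> bool) stream \<Rightarrow> nat \<Rightarrow> qstate" where
  "arlod_traj \<alpha> Q0 \<omega> 0 = Q0"
| "arlod_traj \<alpha> Q0 \<omega> (Suc t) = arlod_step \<alpha> (arlod_traj \<alpha> Q0 \<omega> t) (\<omega> !! t)"

end

theory Submission imports Defs begin

definition Inv :: "nat \<Rightarrow> qstate \<Rightarrow> bool" where
  "Inv N Q \<longleftrightarrow> (\<forall>i\<in>agents N. \<forall>x\<in>{-1,1::int}. Q i x \<in> {-1..1})"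

definition ConsX :: "nat \<Rightarrow> int \<Rightarrow> qstate \<Rightarrow> bool" where
  "ConsX N x Q \<longleftrightarrow> (\<forall>i\<in>agents N. Q i x > Q i (-x))"

definition Cons :: "nat \<Rightarrow> qstate \<Rightarrow> bool" where
  "Cons N Q \<longleftrightarrow> (\<exists>x\<in>{-1,1::int}. ConsX N x Q)"

lemma favoured_cases: "favoured Q i = 1 \<or> favoured Q i = -1"
  by (simp add: favoured_def)

lemma traj_Suc': "arlod_traj a Q \<omega> (Suc t) = arlod_traj a (arlod_step a Q (shd \<omega>)) (stl \<omega>) t"
  by (induction t) (auto simp: snth.simps)

lemma traj_foldl: "arlod_traj a Q \<omega> t = foldl (arlod_step a) Q (stake t \<omega>)"
  by (induction t) (auto simp: stake_Suc simp del: stake.simps(2))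

lemma pmf_bind_ge: "pmf M y * pmf (f y) x \<le> pmf (bind_pmf M f) x"
proof -
  have "ennreal (pmf M y * pmf (f y) x) = (\<integral>\<^sup>+z. ennreal (pmf (f y) x) * indicator {y} z \<partial>M)"
    by (simp add: nn_integral_cmult_indicator emeasure_pmf_single ennreal_mult mult.commute)
  also have "\<dots> \<le> (\<integral>\<^sup>+z. pmf (f z) x \<partial>M)"
    by (intro nn_integral_mono) (auto split: split_indicator)
  also have "\<dots> = ennreal (pmf (bind_pmf M f) x)"
    by (simp add: ennreal_pmf_bind)
  finally show ?thesis by (simp add: ennreal_le_iff)
qed

locale arlod =
  fixes N :: nat and E :: "nat \<Rightarrow> nat \<Rightarrow> bool" and \<alpha> \<epsilon> :: real
  assumes N2: "N \<ge> 2" and sg: "simple_graph N E" and cg: "connected_graph N E"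
    and a0: "0 < \<alpha>" and a1: "\<alpha> < 1" and e0: "0 < \<epsilon>" and e1: "\<epsilon> < 1"
begin

abbreviation "D \<equiv> round_noise N E \<epsilon>"
abbreviation "step \<equiv> arlod_step \<alpha>"
definition goodl :: "nat \<times> nat \<times> bool \<Rightarrow> bool" where
  "goodl c \<longleftrightarrow> fst c \<in> agents N \<and> E (fst (snd c)) (fst c)"

lemma fin_agents: "finite (agents N)" by (simp add: agents_def)

lemma edge_agents: "E u v \<Longrightarrow> u \<in> agents N \<and> v \<in> agents N"
  using sg by (auto simp: simple_graph_def)

lemma edge_sym: "E u v \<Longrightarrow> E v u"
  using sg by (auto simp: simple_graph_def)

lemma edge_irrefl: "E u v \<Longrightarrow> u \<noteq> v"
  using sg by (auto simp: simple_graph_def)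

lemma nbrs_sub: "nbrs E i \<subseteq> agents N"
  using edge_agents by (auto simp: nbrs_def)

lemma nbrs_fin: "finite (nbrs E i)"
  using nbrs_sub fin_agents finite_subset by blast

lemma has_nbr: assumes "i \<in> agents N" shows "\<exists>u. E u i"
proof -
  define k where "k = (if i = 1 then 2 else (1::nat))"
  have k: "k \<in> agents N" "k \<noteq> i" using N2 assms by (auto simp: k_def agents_def)
  have "E\<^sup>*\<^sup>* k i" using cg k assms by (auto simp: connected_graph_def)
  then show ?thesis using k(2) by (cases rule: rtranclp.cases) auto
qed

lemma nbrs_ne: "i \<in> agents N \<Longrightarrow> nbrs E i \<noteq> {}"
  using has_nbr by (auto simp: nbrs_def)

lemma card_nbrs: "i \<in> agents N \<Longrightarrow> 0 < card (nbrs E i) \<and> card (nbrs E i) \<le> N"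
proof -
  assume i: "i \<in> agents N"
  have "card (nbrs E i) \<le> card (agents N)" by (rule card_mono[OF fin_agents nbrs_sub])
  then show ?thesis using nbrs_ne[OF i] nbrs_fin by (auto simp: agents_def card_gt_0_iff)
qed

lemma set_D: "c \<in> set_pmf D \<Longrightarrow> goodl c"
proof -
  have ne: "agents N \<noteq> {}" using N2 by (auto simp: agents_def)
  assume "c \<in> set_pmf D"
  then obtain i where i: "i \<in> agents N" and
    c1: "c \<in> set_pmf (pmf_of_set (nbrs E i) \<bind> (\<lambda>j. bernoulli_pmf \<epsilon> \<bind> (\<lambda>b. return_pmf (i, j, b))))"
    unfolding round_noise_def set_bind_pmf set_pmf_of_set[OF ne fin_agents] by blast
  then obtain j where j: "j \<in> nbrs E i" and c2: "c \<in> set_pmf (bernoulli_pmf \<epsilon> \<bind> (\<lambda>b. return_pmf (i, j, b)))"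
    unfolding set_bind_pmf set_pmf_of_set[OF nbrs_ne[OF i] nbrs_fin] by blast
  then obtain b where "c = (i, j, b)" unfolding set_bind_pmf set_return_pmf by blast
  then show ?thesis using i j by (simp add: goodl_def nbrs_def)
qed

definition p :: real where "p = (1 / real N) * ((1 / real N) * min \<epsilon> (1 - \<epsilon>))"

lemma p_pos: "0 < p" and p_le1: "p \<le> 1"
proof -
  have "min \<epsilon> (1 - \<epsilon>) \<le> 1" using e0 e1 by auto
  moreover have "1 / real N \<le> 1" using N2 by auto
  moreover have "0 \<le> min \<epsilon> (1 - \<epsilon>)" using e0 e1 by auto
  ultimately have "(1 / real N) * min \<epsilon> (1 - \<epsilon>) \<le> 1" by (intro mult_le_one) auto
  then show "p \<le> 1" unfolding p_def using \<open>1 / real N \<le> 1\<close> e0 e1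
    by (intro mult_le_one) auto
  show "0 < p" unfolding p_def using e0 e1 N2 by simp
qed

lemma pmf_D: assumes "goodl c" shows "p \<le> pmf D c"
proof -
  obtain i j b where c: "c = (i, j, b)" by (cases c) auto
  have i: "i \<in> agents N" and j: "j \<in> nbrs E i" using assms by (auto simp: goodl_def c nbrs_def)
  have ne: "agents N \<noteq> {}" using N2 by (auto simp: agents_def)
  have cA: "card (agents N) = N" by (simp add: agents_def)
  have b: "min \<epsilon> (1 - \<epsilon>) \<le> pmf (bernoulli_pmf \<epsilon>) b"
    using e0 e1 by (cases b) auto
  have l3: "pmf (bernoulli_pmf \<epsilon>) b * pmf (return_pmf (i, j, b)) c
      \<le> pmf (bernoulli_pmf \<epsilon> \<bind> (\<lambda>b. return_pmf (i, j, b))) c"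
    by (rule pmf_bind_ge)
  have l2: "pmf (pmf_of_set (nbrs E i)) j * pmf (bernoulli_pmf \<epsilon> \<bind> (\<lambda>b. return_pmf (i, j, b))) c
      \<le> pmf (pmf_of_set (nbrs E i) \<bind> (\<lambda>j. bernoulli_pmf \<epsilon> \<bind> (\<lambda>b. return_pmf (i, j, b)))) c"
    by (rule pmf_bind_ge)
  have l1: "pmf (pmf_of_set (agents N)) i * pmf (pmf_of_set (nbrs E i) \<bind> (\<lambda>j. bernoulli_pmf \<epsilon> \<bind> (\<lambda>b. return_pmf (i, j, b)))) c
      \<le> pmf D c"
    unfolding round_noise_def by (rule pmf_bind_ge)
  have pa: "pmf (pmf_of_set (agents N)) i = 1 / real N" using i ne fin_agents cA by simp
  have pn: "pmf (pmf_of_set (nbrs E i)) j \<ge> 1 / real N"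
    using j nbrs_ne[OF i] nbrs_fin card_nbrs[OF i] by (simp add: frac_le)
  have m: "(1/real N) * pmf (bernoulli_pmf \<epsilon>) b \<le> pmf (pmf_of_set (nbrs E i)) j * pmf (bernoulli_pmf \<epsilon>) b"
    by (rule mult_right_mono[OF pn pmf_nonneg])
  have ret: "pmf (return_pmf (i, j, b)) c = 1" by (simp add: c)
  have "p \<le> (1 / real N) * ((1 / real N) * pmf (bernoulli_pmf \<epsilon>) b)"
    unfolding p_def using b N2 by (intro mult_left_mono) auto
  also have "\<dots> \<le> (1 / real N) * (pmf (pmf_of_set (nbrs E i)) j * pmf (bernoulli_pmf \<epsilon>) b)"
    using m by (intro mult_left_mono) auto
  also have "\<dots> = (1 / real N) * (pmf (pmf_of_set (nbrs E i)) j * (pmf (bernoulli_pmf \<epsilon>) b * pmf (return_pmf (i, j, b)) c))"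
    using ret by simp
  also have "\<dots> \<le> (1 / real N) * (pmf (pmf_of_set (nbrs E i)) j * pmf (bernoulli_pmf \<epsilon> \<bind> (\<lambda>b. return_pmf (i, j, b))) c)"
    by (intro mult_left_mono l3 pmf_nonneg) auto
  also have "\<dots> \<le> (1 / real N) * pmf (pmf_of_set (nbrs E i) \<bind> (\<lambda>j. bernoulli_pmf \<epsilon> \<bind> (\<lambda>b. return_pmf (i, j, b)))) c"
    by (intro mult_left_mono l2) auto
  also have "\<dots> \<le> pmf D c" using l1 pa by simp
  finally show ?thesis .
qed

lemma goodl_set_D: "goodl c \<Longrightarrow> c \<in> set_pmf D"
proof -
  assume "goodl c"
  then have "p \<le> pmf D c" by (rule pmf_D)
  then have "pmf D c \<noteq> 0" using p_pos by linarith
  then show ?thesis by (simp add: set_pmf_iff)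
qed

lemma fin_D: "finite (set_pmf D)"
proof (rule finite_subset)
  show "set_pmf D \<subseteq> agents N \<times> agents N \<times> (UNIV :: bool set)"
  proof
    fix c assume "c \<in> set_pmf D"
    then have g: "goodl c" by (rule set_D)
    obtain i j b where c: "c = (i, j, b)" by (cases c) auto
    have "E j i" "i \<in> agents N" using g by (simp_all add: goodl_def c)
    then have "j \<in> agents N" using edge_agents by blast
    then show "c \<in> agents N \<times> agents N \<times> UNIV" using \<open>i \<in> agents N\<close> c by simp
  qed
  show "finite (agents N \<times> agents N \<times> (UNIV :: bool set))" using fin_agents by simp
qed


lemma all_nat_split: "(\<forall>t::nat. P t) \<longleftrightarrow> P 0 \<and> (\<forall>t. P (Suc t))"
  by (metis not0_implies_Suc)

lemma fav_strict: "x \<in> {-1, 1::int} \<Longrightarrow> Q j x > Q j (-x) \<Longrightarrow> favoured Q j = x"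
  by (auto simp: favoured_def)

lemma conv_bound: assumes "q \<in> {-1..1}" "R \<in> {-1, 1::real}" shows "(1 - \<alpha>) * q + \<alpha> * R \<in> {-1..1}"
proof -
  have "(1 - \<alpha>) * q \<le> (1 - \<alpha>) * 1" using assms a1 by (intro mult_left_mono) auto
  moreover have "(1 - \<alpha>) * (-1) \<le> (1 - \<alpha>) * q" using assms a1 by (intro mult_left_mono) auto
  ultimately show ?thesis using assms a0 by auto
qed

lemma Inv_step: assumes "Inv N Q" shows "Inv N (step Q c)"
proof -
  obtain i j b where c: "c = (i, j, b)" by (cases c) auto
  define ex where "ex = (if b then - favoured Q i else favoured Q i)"
  define R where "R = (if ex = favoured Q j then 1 else -1 :: real)"
  have st: "step Q c = Q(i := (Q i)(ex := (1 - \<alpha>) * Q i ex + \<alpha> * R))"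
    by (simp add: arlod_step_def c ex_def R_def Let_def)
  show ?thesis unfolding Inv_def
  proof (intro ballI)
    fix k x assume k: "k \<in> agents N" and x: "x \<in> {-1, 1::int}"
    have q: "Q k x \<in> {-1..1}" using assms k x unfolding Inv_def by blast
    show "step Q c k x \<in> {-1..1}"
    proof (cases "k = i \<and> x = ex")
      case True
      then have "step Q c k x = (1 - \<alpha>) * Q k x + \<alpha> * R" by (simp add: st)
      then show ?thesis using conv_bound[OF q, of R] by (simp add: R_def)
    next
      case False
      then have "step Q c k x = Q k x" by (auto simp: st)
      then show ?thesis using q by simp
    qed
  qed
qed

lemma Inv_foldl: "Inv N Q \<Longrightarrow> Inv N (foldl step Q ws)"
  by (induction ws arbitrary: Q) (auto intro: Inv_step)

lemma Inv_traj: "Inv N Q \<Longrightarrow> Inv N (arlod_traj \<alpha> Q \<omega> t)"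
  by (induction t) (auto intro: Inv_step)

lemma ConsX_step:
  assumes inv: "Inv N Q" and x: "x \<in> {-1, 1::int}" and cx: "ConsX N x Q" and g: "goodl c"
  shows "ConsX N x (step Q c)"
proof -
  obtain i j b where c: "c = (i, j, b)" by (cases c) auto
  have i: "i \<in> agents N" and ji: "E j i" using g by (auto simp: goodl_def c)
  have j: "j \<in> agents N" using edge_agents[OF ji] by simp
  have fj: "favoured Q j = x" using cx j x by (intro fav_strict) (auto simp: ConsX_def)
  define ex where "ex = (if b then - favoured Q i else favoured Q i)"
  define R where "R = (if ex = favoured Q j then 1 else -1 :: real)"
  have st: "step Q c = Q(i := (Q i)(ex := (1 - \<alpha>) * Q i ex + \<alpha> * R))"
    by (simp add: arlod_step_def c ex_def R_def Let_def)
  have exc: "ex = x \<or> ex = -x" using favoured_cases[of Q i] x by (auto simp: ex_def)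
  have xx: "x \<noteq> -x" using x by auto
  have qx: "Q i x \<in> {-1..1}" "Q i (-x) \<in> {-1..1}" using inv i x by (auto simp: Inv_def)
  have lt: "Q i x > Q i (-x)" using cx i by (simp add: ConsX_def)
  show ?thesis unfolding ConsX_def
  proof (intro ballI)
    fix k assume k: "k \<in> agents N"
    show "step Q c k (-x) < step Q c k x"
    proof (cases "k = i")
      case False
      then show ?thesis using cx k by (simp add: st ConsX_def)
    next
      case True
      from exc show ?thesis
      proof
        assume e: "ex = x"
        then have "R = 1" using fj by (simp add: R_def)
        have "(1 - \<alpha>) * Q i x + \<alpha> = Q i x + \<alpha> * (1 - Q i x)" by (simp add: algebra_simps)
        moreover have "0 \<le> \<alpha> * (1 - Q i x)" using a0 qx by simp
        ultimately show ?thesis using True e xx lt \<open>R = 1\<close> by (simp add: st)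
      next
        assume e: "ex = -x"
        then have "R = -1" using fj xx by (simp add: R_def)
        have "(1 - \<alpha>) * Q i (-x) - \<alpha> = Q i (-x) - \<alpha> * (1 + Q i (-x))" by (simp add: algebra_simps)
        moreover have "0 \<le> \<alpha> * (1 + Q i (-x))" using a0 qx by simp
        ultimately show ?thesis using True e xx lt \<open>R = -1\<close> by (simp add: st)
      qed
    qed
  qed
qed

lemma express:
  assumes "j \<noteq> i" "y \<in> {-1, 1::int}"
  shows "step Q (i, j, favoured Q i \<noteq> y) =
         Q(i := (Q i)(y := (1 - \<alpha>) * Q i y + \<alpha> * (if y = favoured Q j then 1 else -1)))"
proof -
  have ex: "(if favoured Q i \<noteq> y then - favoured Q i else favoured Q i) = y"
    using favoured_cases[of Q i] assms(2) by auto
  show ?thesis unfolding arlod_step_def Let_def using ex by simp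
qed

lemma push:
  assumes i: "i \<in> agents N" and ji: "E j i" and y: "y \<in> {-1, 1::int}"
  shows "\<exists>ws. length ws = n \<and> (\<forall>c\<in>set ws. goodl c) \<and>
     foldl step Q ws = Q(i := (Q i)(y := (if y = favoured Q j then 1 else -1) +
        (1 - \<alpha>) ^ n * (Q i y - (if y = favoured Q j then 1 else -1))))"
proof (induction n)
  case 0
  show ?case by (intro exI[of _ "[]"]) simp
next
  case (Suc n)
  define R where "R = (if y = favoured Q j then 1 else -1 :: real)"
  from Suc.IH obtain ws where ws: "length ws = n" "\<forall>c\<in>set ws. goodl c"
    and eq: "foldl step Q ws = Q(i := (Q i)(y := R + (1 - \<alpha>) ^ n * (Q i y - R)))"
    unfolding R_def by blast
  define Qn where "Qn = foldl step Q ws"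
  have jne: "j \<noteq> i" using edge_irrefl[OF ji] .
  have fj: "favoured Qn j = favoured Q j" using jne by (simp add: Qn_def eq favoured_def)
  have Qni: "Qn i y = R + (1 - \<alpha>) ^ n * (Q i y - R)" by (simp add: Qn_def eq)
  define c where "c = (i, j, favoured Qn i \<noteq> y)"
  have st: "step Qn c = Qn(i := (Qn i)(y := (1 - \<alpha>) * Qn i y + \<alpha> * R))"
    unfolding c_def by (subst express[OF jne y]) (simp add: fj R_def)
  have val: "(1 - \<alpha>) * (R + (1 - \<alpha>) ^ n * (Q i y - R)) + \<alpha> * R = R + (1 - \<alpha>) ^ Suc n * (Q i y - R)"
    by (simp add: algebra_simps)
  have gc: "goodl c" using i ji by (simp add: c_def goodl_def)
  show ?case
  proof (intro exI[of _ "ws @ [c]"] conjI)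
    show "length (ws @ [c]) = Suc n" using ws by simp
    show "\<forall>c\<in>set (ws @ [c]). goodl c" using ws gc by auto
    have "foldl step Q (ws @ [c]) = step Qn c" by (simp add: Qn_def)
    also have "\<dots> = Q(i := (Q i)(y := R + (1 - \<alpha>) ^ Suc n * (Q i y - R)))"
      unfolding st Qni val by (simp add: Qn_def eq)
    finally show "foldl step Q (ws @ [c]) = Q(i := (Q i)(y := (if y = favoured Q j then 1 else -1) +
        (1 - \<alpha>) ^ Suc n * (Q i y - (if y = favoured Q j then 1 else -1))))" by (simp add: R_def)
  qed
qed


definition n0 :: nat where "n0 = (SOME n. (1 - \<alpha>) ^ n < 1 / 2)"

lemma n0_prop: "(1 - \<alpha>) ^ n0 < 1 / 2"
proof -
  have "\<exists>n. (1 - \<alpha>) ^ n < 1 / 2" using a0 by (intro real_arch_pow_inv) auto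
  then show ?thesis unfolding n0_def by (rule someI_ex)
qed

definition T :: "int \<Rightarrow> qstate \<Rightarrow> nat set" where
  "T g Q = {i \<in> agents N. Q i g > Q i (-g)}"

lemma copy:
  assumes i: "i \<in> agents N" and ji: "E j i" and inv: "Inv N Q"
  shows "\<exists>ws. length ws = 2 * n0 \<and> (\<forall>c\<in>set ws. goodl c) \<and>
     (\<forall>k. k \<noteq> i \<longrightarrow> foldl step Q ws k = Q k) \<and>
     foldl step Q ws i (favoured Q j) > foldl step Q ws i (- favoured Q j)"
proof -
  define g where "g = favoured Q j"
  define \<beta> where "\<beta> = (1 - \<alpha>) ^ n0"
  have g: "g \<in> {-1, 1}" using favoured_cases[of Q j] by (auto simp: g_def)
  have mg: "-g \<in> {-1, 1}" "-g \<noteq> g" using g by auto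
  have jne: "j \<noteq> i" using edge_irrefl[OF ji] .
  have qg: "Q i g \<in> {-1..1}" "Q i (-g) \<in> {-1..1}" using inv i g mg unfolding Inv_def by blast+
  have "\<exists>ws. length ws = n0 \<and> (\<forall>c\<in>set ws. goodl c) \<and> foldl step Q ws = Q(i := (Q i)(g := 1 + \<beta> * (Q i g - 1)))"
    using push[OF i ji g, of n0 Q] unfolding g_def \<beta>_def by simp
  then obtain ws1 where ws1: "length ws1 = n0" "\<forall>c\<in>set ws1. goodl c"
    and e1: "foldl step Q ws1 = Q(i := (Q i)(g := 1 + \<beta> * (Q i g - 1)))" by blast
  define Q1 where "Q1 = foldl step Q ws1"
  have fj: "favoured Q1 j = g" using jne by (simp add: Q1_def e1 favoured_def g_def)
  have "\<exists>ws. length ws = n0 \<and> (\<forall>c\<in>set ws. goodl c) \<and> foldl step Q1 ws = Q1(i := (Q1 i)(-g := -1 + \<beta> * (Q1 i (-g) + 1)))"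
    using push[OF i ji mg(1), of n0 Q1] mg(2) unfolding fj \<beta>_def by simp
  then obtain ws2 where ws2: "length ws2 = n0" "\<forall>c\<in>set ws2. goodl c"
    and e2: "foldl step Q1 ws2 = Q1(i := (Q1 i)(-g := -1 + \<beta> * (Q1 i (-g) + 1)))" by blast
  have Q1i: "Q1 i (-g) = Q i (-g)" "Q1 i g = 1 + \<beta> * (Q i g - 1)" using mg(2)
    by (auto simp: Q1_def e1)
  have b0: "0 \<le> \<beta>" using a1 by (simp add: \<beta>_def)
  have b1: "\<beta> < 1/2" using n0_prop by (simp add: \<beta>_def)
  have l1: "\<beta> * (-2) \<le> \<beta> * (Q i g - 1)" using qg b0 by (intro mult_left_mono) auto
  have l2: "\<beta> * (Q i (-g) + 1) \<le> \<beta> * 2" using qg b0 by (intro mult_left_mono) auto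
  show ?thesis
  proof (intro exI[of _ "ws1 @ ws2"] conjI allI impI)
    show "length (ws1 @ ws2) = 2 * n0" using ws1 ws2 by simp
    show "\<forall>c\<in>set (ws1 @ ws2). goodl c" using ws1 ws2 by auto
    have f: "foldl step Q (ws1 @ ws2) = foldl step Q1 ws2" by (simp add: Q1_def)
    fix k assume "k \<noteq> i"
    then show "foldl step Q (ws1 @ ws2) k = Q k" unfolding f e2 by (simp add: Q1_def e1)
  next
    have f: "foldl step Q (ws1 @ ws2) = foldl step Q1 ws2" by (simp add: Q1_def)
    have "foldl step Q (ws1 @ ws2) i g = 1 + \<beta> * (Q i g - 1)"
      unfolding f e2 using mg(2) Q1i by auto
    moreover have "foldl step Q (ws1 @ ws2) i (-g) = -1 + \<beta> * (Q i (-g) + 1)"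
      unfolding f e2 using Q1i by auto
    ultimately show "foldl step Q (ws1 @ ws2) i (- favoured Q j) < foldl step Q (ws1 @ ws2) i (favoured Q j)"
      using l1 l2 b1 unfolding g_def[symmetric] by linarith
  qed
qed

lemma cross: "E\<^sup>*\<^sup>* u v \<Longrightarrow> u \<in> A \<Longrightarrow> v \<notin> A \<Longrightarrow> \<exists>a b. a \<in> A \<and> b \<notin> A \<and> E a b"
  by (induction rule: rtranclp_induct) auto

lemma spread:
  "Inv N Q \<Longrightarrow> g \<in> {-1, 1} \<Longrightarrow> i0 \<in> T g Q \<Longrightarrow> card (agents N - T g Q) \<le> m \<Longrightarrow>
   \<exists>ws. length ws \<le> 2 * n0 * m \<and> (\<forall>c\<in>set ws. goodl c) \<and> Cons N (foldl step Q ws)"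
proof (induction m arbitrary: Q i0)
  case 0
  then have "agents N - T g Q = {}" using fin_agents by simp
  then have "ConsX N g Q" by (auto simp: ConsX_def T_def)
  then show ?case using 0 by (intro exI[of _ "[]"]) (auto simp: Cons_def)
next
  case (Suc m)
  show ?case
  proof (cases "agents N - T g Q = {}")
    case True
    then have "ConsX N g Q" by (auto simp: ConsX_def T_def)
    then show ?thesis using Suc by (intro exI[of _ "[]"]) (auto simp: Cons_def)
  next
    case False
    then obtain v where v: "v \<in> agents N" "v \<notin> T g Q" by auto
    have i0: "i0 \<in> agents N" using Suc.prems(3) by (simp add: T_def)
    have "E\<^sup>*\<^sup>* i0 v" using cg i0 v by (simp add: connected_graph_def)
    then obtain a b where ab: "a \<in> T g Q" "b \<notin> T g Q" "E a b"
      using cross Suc.prems(3) v(2) by blast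
    have b: "b \<in> agents N" using edge_agents[OF ab(3)] by simp
    have fa: "favoured Q a = g" using ab(1) Suc.prems(2) by (intro fav_strict) (auto simp: T_def)
    obtain ws1 where ws1: "length ws1 = 2 * n0" "\<forall>c\<in>set ws1. goodl c"
      and oth: "\<forall>k. k \<noteq> b \<longrightarrow> foldl step Q ws1 k = Q k"
      and bb: "foldl step Q ws1 b g > foldl step Q ws1 b (- g)"
      using copy[OF b ab(3) Suc.prems(1)] fa by auto
    define Q' where "Q' = foldl step Q ws1"
    have inv': "Inv N Q'" using Suc.prems(1) by (simp add: Q'_def Inv_foldl)
    have T': "T g Q' = insert b (T g Q)"
    proof (rule set_eqI)
      fix k show "k \<in> T g Q' \<longleftrightarrow> k \<in> insert b (T g Q)"
      proof (cases "k = b")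
        case True then show ?thesis using bb b by (simp add: T_def Q'_def)
      next
        case False then have "Q' k = Q k" using oth by (simp add: Q'_def)
        then show ?thesis using False by (simp add: T_def)
      qed
    qed
    have "agents N - T g Q' = (agents N - T g Q) - {b}" using T' by auto
    then have "card (agents N - T g Q') = card (agents N - T g Q) - 1"
      using b ab(2) fin_agents by (simp add: card_Diff_singleton)
    then have "card (agents N - T g Q') \<le> m" using Suc.prems(4) by simp
    moreover have "b \<in> T g Q'" using T' by simp
    ultimately obtain ws2 where ws2: "length ws2 \<le> 2 * n0 * m" "\<forall>c\<in>set ws2. goodl c"
      "Cons N (foldl step Q' ws2)"
      using Suc.IH[OF inv' Suc.prems(2)] by blast
    show ?thesis
    proof (intro exI[of _ "ws1 @ ws2"] conjI)
      show "length (ws1 @ ws2) \<le> 2 * n0 * Suc m" using ws1 ws2 by simp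
      show "\<forall>c\<in>set (ws1 @ ws2). goodl c" using ws1 ws2 by auto
      show "Cons N (foldl step Q (ws1 @ ws2))" using ws2 by (simp add: Q'_def)
    qed
  qed
qed

definition K :: nat where "K = 2 * n0 * N"

lemma path: assumes inv: "Inv N Q"
  shows "\<exists>ws. length ws \<le> K \<and> (\<forall>c\<in>set ws. goodl c) \<and> Cons N (foldl step Q ws)"
proof -
  have one: "1 \<in> agents N" using N2 by (simp add: agents_def)
  obtain y where y: "E y 1" using has_nbr[OF one] by blast
  define g where "g = favoured Q y"
  have g: "g \<in> {-1, 1}" using favoured_cases[of Q y] by (auto simp: g_def)
  obtain ws1 where ws1: "length ws1 = 2 * n0" "\<forall>c\<in>set ws1. goodl c"
    and bb: "foldl step Q ws1 1 g > foldl step Q ws1 1 (- g)"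
    using copy[OF one y inv] unfolding g_def by auto
  define Q' where "Q' = foldl step Q ws1"
  have inv': "Inv N Q'" using inv by (simp add: Q'_def Inv_foldl)
  have t1: "1 \<in> T g Q'" using bb one by (simp add: T_def Q'_def)
  have "agents N - T g Q' \<subseteq> agents N - {1}" using t1 by auto
  then have "card (agents N - T g Q') \<le> card (agents N - {1})"
    by (intro card_mono) (auto simp: fin_agents)
  also have "\<dots> = N - 1" using one by (simp add: agents_def)
  finally obtain ws2 where ws2: "length ws2 \<le> 2 * n0 * (N - 1)" "\<forall>c\<in>set ws2. goodl c"
      "Cons N (foldl step Q' ws2)"
    using spread[OF inv' g t1] by blast
  obtain N' where N': "N = Suc N'" using N2 by (cases N) auto
  have "2 * n0 + 2 * n0 * (N - 1) = K" unfolding K_def using N' by simp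
  then show ?thesis using ws1 ws2
    by (intro exI[of _ "ws1 @ ws2"]) (auto simp: Q'_def)
qed


abbreviation S where "S \<equiv> stream_space (measure_pmf D)"

lemma S_prob: "prob_space S" by (rule prob_space.prob_space_stream_space[OF prob_space_measure_pmf])

lemma space_S: "space S = UNIV" by (simp add: space_stream_space)

lemma meas_stake: "stake t \<in> measurable S (count_space UNIV)"
  by measurable

lemma pred_traj: "{\<omega> \<in> space S. P (arlod_traj \<alpha> Q \<omega> t)} \<in> sets S"
proof -
  have "{\<omega> \<in> space S. P (arlod_traj \<alpha> Q \<omega> t)} = stake t -` {xs. P (foldl step Q xs)} \<inter> space S"
    by (auto simp: traj_foldl)
  then show ?thesis using measurable_sets[OF meas_stake, of "{xs. P (foldl step Q xs)}"] by simp
qed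

lemma pred_traj2[measurable]: "Measurable.pred S (\<lambda>\<omega>. arlod_traj \<alpha> Q \<omega> t i x < arlod_traj \<alpha> Q \<omega> t i y)"
  unfolding pred_def by (rule pred_traj)

lemma bad_meas: "{\<omega> \<in> space S. \<forall>t. \<not> Cons N (arlod_traj \<alpha> Q \<omega> t)} \<in> sets S"
proof -
  have "\<And>t. Measurable.pred S (\<lambda>\<omega>. \<not> Cons N (arlod_traj \<alpha> Q \<omega> t))"
    unfolding pred_def by (rule pred_traj)
  then have "Measurable.pred S (\<lambda>\<omega>. \<forall>t. \<not> Cons N (arlod_traj \<alpha> Q \<omega> t))"
    by (intro pred_intros_countable)
  then show ?thesis unfolding pred_def .
qed

definition h :: "qstate \<Rightarrow> real" where
  "h Q = measure S {\<omega> \<in> space S. \<forall>t. \<not> Cons N (arlod_traj \<alpha> Q \<omega> t)}"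

lemma h_nonneg: "0 \<le> h Q" by (simp add: h_def)

lemma h_le1: "h Q \<le> 1" unfolding h_def by (rule prob_space.prob_le_1[OF S_prob])

lemma h_cons: "Cons N Q \<Longrightarrow> h Q = 0"
proof -
  assume "Cons N Q"
  then have e: "{\<omega> \<in> space S. \<forall>t. \<not> Cons N (arlod_traj \<alpha> Q \<omega> t)} = {}"
    by (auto intro: exI[of _ 0])
  show ?thesis unfolding h_def e by simp
qed

lemma h_rec: assumes nc: "\<not> Cons N Q"
  shows "h Q = (\<Sum>c\<in>set_pmf D. h (step Q c) * pmf D c)"
proof -
  have eqs: "\<And>c. {x \<in> space S. \<forall>t. \<not> Cons N (arlod_traj \<alpha> Q (c ## x) t)}
      = {x \<in> space S. \<forall>t. \<not> Cons N (arlod_traj \<alpha> (step Q c) x t)}"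
    using nc by (subst all_nat_split) (simp add: traj_Suc' del: arlod_traj.simps(2))
  have "ennreal (h Q) = (\<integral>\<^sup>+c. ennreal (measure S {x \<in> space S. \<forall>t. \<not> Cons N (arlod_traj \<alpha> Q (c ## x) t)}) \<partial>measure_pmf D)"
    unfolding h_def by (rule prob_space.prob_stream_space[OF prob_space_measure_pmf bad_meas])
  also have "\<dots> = (\<integral>\<^sup>+c. ennreal (h (step Q c)) \<partial>measure_pmf D)"
    unfolding eqs h_def ..
  also have "\<dots> = (\<Sum>c\<in>set_pmf D. ennreal (h (step Q c)) * pmf D c)"
    by (rule nn_integral_measure_pmf_finite[OF fin_D]) simp
  also have "\<dots> = ennreal (\<Sum>c\<in>set_pmf D. h (step Q c) * pmf D c)"
    by (subst sum_ennreal[symmetric]) (auto simp: h_nonneg ennreal_mult)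
  finally show ?thesis using h_nonneg
    by (subst (asm) ennreal_inj) (auto intro!: sum_nonneg simp: h_nonneg)
qed

definition sH :: real where "sH = Sup (h ` {Q. Inv N Q})"

lemma bdd: "bdd_above (h ` {Q. Inv N Q})"
  using h_le1 by (intro bdd_aboveI[of _ 1]) auto

lemma Inv_ex: "Inv N (\<lambda>_ _. 0)" by (simp add: Inv_def)

lemma h_le_s: "Inv N Q \<Longrightarrow> h Q \<le> sH"
  unfolding sH_def by (rule cSup_upper[OF _ bdd]) auto

lemma sH_nonneg: "0 \<le> sH"
  using h_le_s[OF Inv_ex] h_nonneg[of "\<lambda>_ _. 0"] by linarith

lemma reach: "Inv N Q \<Longrightarrow> \<forall>c\<in>set ws. goodl c \<Longrightarrow> Cons N (foldl step Q ws) \<Longrightarrow>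
    h Q \<le> sH - p ^ length ws * sH"
proof (induction ws arbitrary: Q)
  case Nil
  then show ?case using h_cons by simp
next
  case (Cons c ws)
  have pk: "p ^ length ws \<le> 1" "0 \<le> p ^ length ws" using p_pos p_le1 by (auto intro: power_le_one)
  show ?case
  proof (cases "Cons N Q")
    case True
    have "p ^ length (c # ws) * sH \<le> 1 * sH"
      using p_pos p_le1 sH_nonneg by (intro mult_right_mono power_le_one) auto
    then show ?thesis using h_cons[OF True] by simp
  next
    case False
    have gc: "goodl c" using Cons.prems by simp
    have cD: "c \<in> set_pmf D" using goodl_set_D[OF gc] .
    have IH: "h (step Q c) \<le> sH - p ^ length ws * sH"
      using Cons.IH[of "step Q c"] Cons.prems Inv_step by simp
    have rest: "(\<Sum>c'\<in>set_pmf D - {c}. h (step Q c') * pmf D c') \<le> (\<Sum>c'\<in>set_pmf D - {c}. sH * pmf D c')"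
      by (intro sum_mono mult_right_mono h_le_s Inv_step Cons.prems(1)) simp
    have s1: "(\<Sum>c'\<in>set_pmf D. pmf D c') = 1" by (rule sum_pmf_eq_1[OF fin_D]) simp
    have s2: "(\<Sum>c'\<in>set_pmf D - {c}. sH * pmf D c') = sH * (1 - pmf D c)"
      using s1 fin_D cD by (simp add: sum_distrib_left[symmetric] sum_diff1)
    have "h Q = h (step Q c) * pmf D c + (\<Sum>c'\<in>set_pmf D - {c}. h (step Q c') * pmf D c')"
      using h_rec[OF False] fin_D cD by (simp add: sum.remove)
    also have "\<dots> \<le> (sH - p ^ length ws * sH) * pmf D c + sH * (1 - pmf D c)"
      using IH rest s2 by (intro add_mono mult_right_mono) auto
    also have "\<dots> = sH - (p ^ length ws * sH) * pmf D c" by (simp add: algebra_simps)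
    also have "\<dots> \<le> sH - (p ^ length ws * sH) * p"
      using pmf_D[OF gc] pk sH_nonneg by (intro diff_left_mono mult_left_mono) auto
    also have "\<dots> = sH - p ^ length (c # ws) * sH" by (simp add: algebra_simps)
    finally show ?thesis .
  qed
qed

lemma sH_zero: "sH = 0"
proof -
  have b: "\<And>Q. Inv N Q \<Longrightarrow> h Q \<le> sH - p ^ K * sH"
  proof -
    fix Q assume inv: "Inv N Q"
    obtain ws where ws: "length ws \<le> K" "\<forall>c\<in>set ws. goodl c" "Cons N (foldl step Q ws)"
      using path[OF inv] by blast
    have "p ^ K \<le> p ^ length ws" using ws(1) p_pos p_le1 by (intro power_decreasing) auto
    then have "p ^ K * sH \<le> p ^ length ws * sH" using sH_nonneg by (intro mult_right_mono)
    then show "h Q \<le> sH - p ^ K * sH" using reach[OF inv ws(2,3)] by linarith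
  qed
  have "sH \<le> sH - p ^ K * sH"
    unfolding sH_def[of] using Inv_ex b
    by (subst (2 3) sH_def[symmetric]) (intro cSup_least; auto)
  then have "p ^ K * sH \<le> 0" by simp
  moreover have "0 < p ^ K" using p_pos by simp
  ultimately show ?thesis using sH_nonneg
    by (metis mult_pos_pos not_le order.not_eq_order_implies_strict)
qed


lemma absorb:
  assumes g: "\<forall>n. goodl (\<omega> !! n)" and inv: "Inv N Q" and c: "Cons N (arlod_traj \<alpha> Q \<omega> t0)"
  shows "\<exists>x\<in>{-1, 1::int}. \<forall>i\<in>agents N. \<forall>t\<ge>t0. arlod_traj \<alpha> Q \<omega> t i x > arlod_traj \<alpha> Q \<omega> t i (-x)"
proof -
  obtain x where x: "x \<in> {-1, 1}" and cx: "ConsX N x (arlod_traj \<alpha> Q \<omega> t0)"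
    using c unfolding Cons_def by blast
  have d: "ConsX N x (arlod_traj \<alpha> Q \<omega> (t0 + d))" for d
  proof (induction d)
    case 0 then show ?case using cx by simp
  next
    case (Suc d)
    show ?case using ConsX_step[OF Inv_traj[OF inv] x Suc.IH g[rule_format, of "t0 + d"]] by simp
  qed
  show ?thesis
  proof (intro bexI[OF _ x] ballI allI impI)
    fix i t assume i: "i \<in> agents N" and t: "t0 \<le> t"
    then obtain d where "t = t0 + d" using le_Suc_ex by blast
    then show "arlod_traj \<alpha> Q \<omega> t i (-x) < arlod_traj \<alpha> Q \<omega> t i x"
      using d[of d] i by (simp add: ConsX_def)
  qed
qed

lemma main:
  assumes inv: "Inv N Q0"
  shows "measure S {\<omega> \<in> space S. \<exists>t0. \<exists>x\<in>{-1, 1::int}. \<forall>i\<in>agents N. \<forall>t\<ge>t0.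
                 arlod_traj \<alpha> Q0 \<omega> t i x > arlod_traj \<alpha> Q0 \<omega> t i (-x)} = 1"
proof -
  have "Measurable.pred S (\<lambda>\<omega>. \<exists>t0. \<exists>x\<in>{-1, 1::int}. \<forall>i\<in>agents N. \<forall>t\<ge>t0.
                 arlod_traj \<alpha> Q0 \<omega> t i x > arlod_traj \<alpha> Q0 \<omega> t i (-x))"
    using fin_agents by measurable
  then have meas: "{\<omega> \<in> space S. \<exists>t0. \<exists>x\<in>{-1, 1::int}. \<forall>i\<in>agents N. \<forall>t\<ge>t0.
                 arlod_traj \<alpha> Q0 \<omega> t i x > arlod_traj \<alpha> Q0 \<omega> t i (-x)} \<in> sets S"
    unfolding pred_def .
  have "AE \<omega> in S. stream_all (\<lambda>c. c \<in> set_pmf D) \<omega>"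
    by (rule prob_space.AE_stream_all[OF prob_space_measure_pmf])
       (auto simp: AE_measure_pmf pred_def)
  then have ae1: "AE \<omega> in S. \<forall>n. goodl (\<omega> !! n)"
    by (rule eventually_mono) (auto simp: stream_all_def intro: set_D)
  have "h Q0 = 0" using h_le_s[OF inv] h_nonneg[of Q0] sH_zero by simp
  then have ae2: "AE \<omega> in S. \<not> (\<forall>t. \<not> Cons N (arlod_traj \<alpha> Q0 \<omega> t))"
    unfolding h_def using prob_space.prob_Collect_eq_0[OF S_prob bad_meas] by simp
  have "AE \<omega> in S. \<exists>t0. \<exists>x\<in>{-1, 1::int}. \<forall>i\<in>agents N. \<forall>t\<ge>t0.
                 arlod_traj \<alpha> Q0 \<omega> t i x > arlod_traj \<alpha> Q0 \<omega> t i (-x)"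
    using ae1 ae2
  proof eventually_elim
    case (elim \<omega>)
    then obtain t0 where "Cons N (arlod_traj \<alpha> Q0 \<omega> t0)" by blast
    then show ?case using absorb[OF elim(1) inv] by blast
  qed
  then show ?thesis using prob_space.prob_Collect_eq_1[OF S_prob meas] by simp
qed

end

theorem theorem1:
  fixes N :: nat and E :: "nat \<Rightarrow> nat \<Rightarrow> bool" and \<alpha> \<epsilon> :: real and Q0 :: qstate
  assumes "N \<ge> 2"
    and "simple_graph N E"
    and "connected_graph N E"
    and "0 < \<alpha>" and "\<alpha> < 1"
    and "0 < \<epsilon>" and "\<epsilon> < 1"
    and "\<forall>i\<in>agents N. \<forall>x\<in>{-1, 1::int}. Q0 i x \<in> {-1..1}"
  shows "measure (stream_space (measure_pmf (round_noise N E \<epsilon>)))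
           {\<omega> \<in> space (stream_space (measure_pmf (round_noise N E \<epsilon>))).
              \<exists>t0. \<exists>x\<in>{-1, 1::int}. \<forall>i\<in>agents N. \<forall>t\<ge>t0.
                 arlod_traj \<alpha> Q0 \<omega> t i x > arlod_traj \<alpha> Q0 \<omega> t i (-x)} = 1"
proof -
  interpret arlod N E \<alpha> \<epsilon> using assms by unfold_locales auto
  show ?thesis by (rule main) (use assms(8) in \<open>simp add: Inv_def\<close>)
qed

end
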